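(* Let $A$ be a $d\times n$ matrix with non-negative integer entries such that each standard basis vector $\mathbf e_1,\dots,\mathbf e_d$ of $\mathbb Z^d$ appears as a column of $A$. Let $\mathbf c$ be a column of $A$ and $I=\{k: c_k>0,\ 1\le k\le d\}$. For $i\in I$, let $E^{(i)}$ be the matrix obtained from $A$ by replacing the column $\mathbf c$ with $\mathbf e_i$. Then $p_{E^{(i)}}(\mathbf b)\ge p_A(\mathbf b)$ for all $\mathbf b\in\mathbb Z^d_{\ge0}$.
   Context: For an integer matrix $M$ with $r$ columns and $\mathbf b$ a vector, $p_M(\mathbf b)=\#\{\mathbf x\in\mathbb Z^r_{\ge0}:M\mathbf x=\mathbf b\}$ (the vector partition function, counted as a cardinality). *)

theory Defs
  imports Main "HOL-Library.Extended_Nat"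
begin

text \<open>A d x n matrix with entries in nat is represented as a function
  M :: nat => nat => nat, where M i j is the entry in row i < d and column j < n.
  Vectors in Z^r_{>=0} are functions nat => nat supported on {..<r}.\<close>

definition vp_solutions :: "nat \<Rightarrow> nat \<Rightarrow> (nat \<Rightarrow> nat \<Rightarrow> nat) \<Rightarrow> (nat \<Rightarrow> nat) \<Rightarrow> (nat \<Rightarrow> nat) set" where
  "vp_solutions d n M b =
     {x. (\<forall>j. n \<le> j \<longrightarrow> x j = 0) \<and> (\<forall>i<d. (\<Sum>j<n. M i j * x j) = b i)}"

definition vpf :: "nat \<Rightarrow> nat \<Rightarrow> (nat \<Rightarrow> nat \<Rightarrow> nat) \<Rightarrow> (nat \<Rightarrow> nat) \<Rightarrow> enat" where
  "vpf d n M b = (if finite (vp_solutions d n M b) then enat (card (vp_solutions d n M b)) else \<infinity>)"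

definition is_std_basis_col :: "nat \<Rightarrow> (nat \<Rightarrow> nat \<Rightarrow> nat) \<Rightarrow> nat \<Rightarrow> nat \<Rightarrow> bool" where
  "is_std_basis_col d M j k = (\<forall>i<d. M i j = (if i = k then 1 else 0))"

definition replace_col :: "(nat \<Rightarrow> nat \<Rightarrow> nat) \<Rightarrow> nat \<Rightarrow> nat \<Rightarrow> (nat \<Rightarrow> nat \<Rightarrow> nat)" where
  "replace_col M j0 k = (\<lambda>i j. if j = j0 then (if i = k then 1 else 0) else M i j)"

end

theory Submission
  imports Defs
begin

theorem mainTheorem17:
  fixes d n :: nat and A :: "nat \<Rightarrow> nat \<Rightarrow> nat" and j0 i :: nat and b :: "nat \<Rightarrow> nat"
  assumes basis: "\<forall>k<d. \<exists>j<n. is_std_basis_col d A j k"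
    and j0: "j0 < n"
    and iI: "i \<in> {k. k < d \<and> A k j0 > 0}"
  shows "vpf d n (replace_col A j0 i) b \<ge> vpf d n A b"
proof -
  obtain J where J: "\<And>k. k < d \<Longrightarrow> J k < n \<and> is_std_basis_col d A (J k) k"
    using basis by metis
  have id: "i < d" "A i j0 > 0" using iI by auto
  define E where "E = replace_col A j0 i"
  define K where "K = {k. k < d \<and> k \<noteq> i}"
  define w where "w j = (if j = j0 then A i j0 - 1 else 0) + (\<Sum>k\<in>K. if J k = j then A k j0 else 0)" for j
  define f where "f x = (\<lambda>j. x j + x j0 * w j)" for x :: "nat \<Rightarrow> nat"
  have finK: "finite K" unfolding K_def by auto
  have Jne: "J k \<noteq> j0" if "k \<in> K" for k
  proof
    assume h: "J k = j0"
    from that have k: "k < d" "k \<noteq> i" unfolding K_def by auto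
    with J[of k] h have "A i j0 = 0" using id unfolding is_std_basis_col_def by auto
    with id show False by simp
  qed
  have EJ: "E r (J k) = (if r = k then 1 else 0)" if "k \<in> K" "r < d" for k r
    using Jne[OF that(1)] J[of k] that unfolding E_def replace_col_def K_def is_std_basis_col_def by auto
  have Ew: "(\<Sum>j<n. E r j * w j) + (if r = i then 1 else 0) = A r j0" if r: "r < d" for r
  proof -
    have "(\<Sum>j<n. E r j * w j) = (\<Sum>j<n. E r j * (if j = j0 then A i j0 - 1 else 0))
          + (\<Sum>j<n. \<Sum>k\<in>K. E r j * (if J k = j then A k j0 else 0))"
      unfolding w_def by (simp add: algebra_simps sum.distrib sum_distrib_left)
    also have "(\<Sum>j<n. E r j * (if j = j0 then A i j0 - 1 else 0)) = E r j0 * (A i j0 - 1)"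
      using j0 by (simp add: if_distrib[where f="\<lambda>t. E r _ * t"] cong: if_cong)
    also have "(\<Sum>j<n. \<Sum>k\<in>K. E r j * (if J k = j then A k j0 else 0))
        = (\<Sum>k\<in>K. \<Sum>j<n. E r j * (if J k = j then A k j0 else 0))"
      by (rule sum.swap)
    also have "\<dots> = (\<Sum>k\<in>K. E r (J k) * A k j0)"
    proof (rule sum.cong[OF refl])
      fix k assume "k \<in> K"
      then have "J k < n" using J unfolding K_def by auto
      then show "(\<Sum>j<n. E r j * (if J k = j then A k j0 else 0)) = E r (J k) * A k j0"
        by (simp add: if_distrib[where f="\<lambda>t. E r _ * t"] cong: if_cong)
    qed
    also have "\<dots> = (\<Sum>k\<in>K. if r = k then A k j0 else 0)"
      using EJ r by (intro sum.cong) auto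
    also have "\<dots> = (if r \<in> K then A r j0 else 0)"
      using finK by simp
    finally show ?thesis using r id unfolding E_def replace_col_def K_def by auto
  qed
  have Ex: "(\<Sum>j<n. E r j * x j) + A r j0 * x j0 = (\<Sum>j<n. A r j * x j) + (if r = i then 1 else 0) * x j0"
    for r x
  proof -
    have s1: "(\<Sum>j<n. E r j * x j) = E r j0 * x j0 + (\<Sum>j\<in>{..<n} - {j0}. E r j * x j)"
      using j0 by (simp add: sum.remove)
    have s2: "(\<Sum>j<n. A r j * x j) = A r j0 * x j0 + (\<Sum>j\<in>{..<n} - {j0}. A r j * x j)"
      using j0 by (simp add: sum.remove)
    have s3: "(\<Sum>j\<in>{..<n} - {j0}. E r j * x j) = (\<Sum>j\<in>{..<n} - {j0}. A r j * x j)"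
      by (rule sum.cong) (auto simp: E_def replace_col_def)
    show ?thesis using s1 s2 s3 by (simp add: E_def replace_col_def)
  qed
  have maps: "f x \<in> vp_solutions d n E b" if x: "x \<in> vp_solutions d n A b" for x
  proof -
    have wz: "w j = 0" if "n \<le> j" for j
      unfolding w_def using that j0 J unfolding K_def by (auto intro!: sum.neutral dest: leD)
    have "(\<Sum>j<n. E r j * f x j) = b r" if r: "r < d" for r
    proof -
      have "(\<Sum>j<n. E r j * f x j) = (\<Sum>j<n. E r j * x j) + x j0 * (\<Sum>j<n. E r j * w j)"
        unfolding f_def by (simp add: algebra_simps sum.distrib sum_distrib_left)
      moreover have "(\<Sum>j<n. A r j * x j) = b r" using x r unfolding vp_solutions_def by auto
      moreover note Ex[of r x] Ew[OF r]
      ultimately show ?thesis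
      proof -
        assume a1: "(\<Sum>j<n. E r j * f x j) = (\<Sum>j<n. E r j * x j) + x j0 * (\<Sum>j<n. E r j * w j)"
          and a2: "(\<Sum>j<n. A r j * x j) = b r"
        define S where "S = (\<Sum>j<n. E r j * w j)"
        define T where "T = (\<Sum>j<n. E r j * x j)"
        define D :: nat where "D = (if r = i then 1 else 0)"
        have e1: "S + D = A r j0" using Ew[OF r] unfolding S_def D_def .
        have e2: "T + A r j0 * x j0 = b r + D * x j0" using Ex[of r x] a2 unfolding T_def D_def by simp
        have "T + x j0 * S + D * x j0 = b r + D * x j0"
          using e2 unfolding e1[symmetric] by (simp add: algebra_simps)
        then show ?thesis using a1 unfolding S_def T_def by simp
      qed
    qed
    moreover have "f x j = 0" if "n \<le> j" for j
      using x that wz unfolding vp_solutions_def f_def by auto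
    ultimately show ?thesis unfolding vp_solutions_def by auto
  qed
  have inj: "inj_on f (vp_solutions d n A b)"
  proof (rule inj_onI)
    fix x y assume "f x = f y"
    then have h: "\<And>j. x j + x j0 * w j = y j + y j0 * w j" unfolding f_def by metis
    have wj0: "w j0 = A i j0 - 1" unfolding w_def using Jne by (simp add: sum.neutral)
    from h[of j0] have "x j0 * A i j0 = y j0 * A i j0" using wj0 id
      by (cases "A i j0") (auto simp: algebra_simps)
    then have "x j0 = y j0" using id by simp
    with h show "x = y" by fastforce
  qed
  show ?thesis
  proof (cases "finite (vp_solutions d n E b)")
    case True
    have sub: "f ` vp_solutions d n A b \<subseteq> vp_solutions d n E b" using maps by auto
    then have fa: "finite (vp_solutions d n A b)"
      using True inj finite_imageD finite_subset by metis
    have "card (vp_solutions d n A b) \<le> card (vp_solutions d n E b)"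
      using card_inj_on_le[OF inj sub True] .
    then show ?thesis using True fa unfolding vpf_def E_def by simp
  next
    case False
    then show ?thesis unfolding vpf_def E_def by simp
  qed
qed

end
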